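(* Let $k\ge1$ and let $\Gamma\subset\mathbb{R}_+^k$ be a nonempty compact set. Let $\mu_n=(q_n,s_n,b_n)$, $n=1,2,\dots$, and $\mu=(q,s,b)$ be mechanisms in $\mathcal{M}_\Gamma$. Suppose that $b_n$ converges pointwise to $b$ on $\mathbb{R}^k$ and that $\mu$ is seller favorable. Then $\limsup_{n\to\infty}s_n(x)\le s(x)$ for every $x\in\mathbb{R}_+^k$, and consequently $\limsup_{n\to\infty}R(\mu_n;X)\le R(\mu;X)$ for every random valuation $X$ with values in $\mathbb{R}_+^k$ and finite expectation ($\mathbb{E}\|X\|<\infty$).
   Context: A $\Gamma$-mechanism consists of $q:\mathbb{R}_+^k\to\Gamma$ and $s:\mathbb{R}_+^k\to\mathbb{R}$; it is IC if $q(x)\cdot x-s(x)\ge q(y)\cdot x-s(y)$ for all $x,y\in\mathbb{R}_+^k$, IR if $q(x)\cdot x-s(x)\ge0$ for all $x\in\mathbb{R}_+^k$, and NPT (no positive transfer) if $s(x)\ge0$ for all $x\in\mathbb{R}_+^k$. $\mathcal{M}_\Gamma$ is the set of IC, IR and NPT $\Gamma$-mechanisms. The buyer payoff function of the mechanism is the function $b:\mathbb{R}^k\to\mathbb{R}$, $b(x):=\sup_{z\in\mathbb{R}_+^k}[q(z)\cdot x-s(z)]$ (for IC mechanisms $b(x)=q(x)\cdot x-s(x)$ on $\mathbb{R}_+^k$); a mechanism is written $\mu=(q,s,b)$. For a convex $f:\mathbb{R}^k\to\mathbb{R}$, $f'(x;y):=\lim_{\delta\to0^+}(f(x+\delta y)-f(x))/\delta$.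 A mechanism $\mu=(q,s,b)\in\mathcal{M}_\Gamma$ is seller favorable if $s(x)=b'(x;x)-b(x)$ for every $x\in\mathbb{R}_+^k$. The revenue is $R(\mu;X):=\mathbb{E}[s(X)]$. *)

theory Defs
  imports "HOL-Probability.Probability"
begin

text \<open>Valuations live in the nonnegative orthant of R^k; we index coordinates by a
finite type 'n, so k = CARD('n) \<ge> 1.\<close>

definition nonneg_orthant :: "(real^'n) set" where
  "nonneg_orthant = {x. \<forall>i. 0 \<le> x $ i}"

definition is_IC :: "(real^'n \<Rightarrow> real^'n) \<Rightarrow> (real^'n \<Rightarrow> real) \<Rightarrow> bool" where
  "is_IC q s \<longleftrightarrow> (\<forall>x\<in>nonneg_orthant. \<forall>y\<in>nonneg_orthant.
      q x \<bullet> x - s x \<ge> q y \<bullet> x - s y)"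

definition is_IR :: "(real^'n \<Rightarrow> real^'n) \<Rightarrow> (real^'n \<Rightarrow> real) \<Rightarrow> bool" where
  "is_IR q s \<longleftrightarrow> (\<forall>x\<in>nonneg_orthant. q x \<bullet> x - s x \<ge> 0)"

definition is_NPT :: "(real^'n \<Rightarrow> real) \<Rightarrow> bool" where
  "is_NPT s \<longleftrightarrow> (\<forall>x\<in>nonneg_orthant. s x \<ge> 0)"

definition mechanism_in :: "(real^'n) set \<Rightarrow> (real^'n \<Rightarrow> real^'n) \<Rightarrow> (real^'n \<Rightarrow> real) \<Rightarrow> bool" where
  "mechanism_in \<Gamma> q s \<longleftrightarrow> (\<forall>x\<in>nonneg_orthant. q x \<in> \<Gamma>) \<and> is_IC q s \<and> is_IR q s \<and> is_NPT s"

definition buyer_payoff :: "(real^'n \<Rightarrow> real^'n) \<Rightarrow> (real^'n \<Rightarrow> real) \<Rightarrow> real^'n \<Rightarrow> real" where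
  "buyer_payoff q s x = (SUP z\<in>nonneg_orthant. q z \<bullet> x - s z)"

definition dir_deriv :: "(real^'n \<Rightarrow> real) \<Rightarrow> real^'n \<Rightarrow> real^'n \<Rightarrow> real" where
  "dir_deriv f x y = Lim (at_right (0::real)) (\<lambda>\<delta>. (f (x + \<delta> *\<^sub>R y) - f x) / \<delta>)"

definition seller_favorable :: "(real^'n) set \<Rightarrow> (real^'n \<Rightarrow> real^'n) \<Rightarrow> (real^'n \<Rightarrow> real) \<Rightarrow> bool" where
  "seller_favorable \<Gamma> q s \<longleftrightarrow> mechanism_in \<Gamma> q s \<and>
     (\<forall>x\<in>nonneg_orthant. s x = dir_deriv (buyer_payoff q s) x x - buyer_payoff q s x)"

definition revenue :: "'a measure \<Rightarrow> ('a \<Rightarrow> real^'n) \<Rightarrow> (real^'n \<Rightarrow> real) \<Rightarrow> real" where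
  "revenue M X s = (\<integral>\<omega>. s (X \<omega>) \<partial>M)"

end

theory Submission imports Defs begin

lemma zero_orth: "0 \<in> nonneg_orthant"
  by (simp add: nonneg_orthant_def)

lemma scale_orth: "x \<in> nonneg_orthant \<Longrightarrow> 0 \<le> c \<Longrightarrow> c *\<^sub>R x \<in> nonneg_orthant"
  by (simp add: nonneg_orthant_def)

lemma ray_orth: "x \<in> nonneg_orthant \<Longrightarrow> 0 \<le> d \<Longrightarrow> x + d *\<^sub>R x \<in> nonneg_orthant"
  by (simp add: nonneg_orthant_def)

lemma payoff_upper:
  fixes q :: "real^'n \<Rightarrow> real^'n"
  assumes mech: "mechanism_in \<Gamma> q s" and C: "\<forall>g\<in>\<Gamma>. norm g \<le> C"
    and z: "z \<in> nonneg_orthant"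
  shows "q z \<bullet> y - s z \<le> buyer_payoff q s y"
proof -
  have "bdd_above ((\<lambda>z. q z \<bullet> y - s z) ` nonneg_orthant)"
  proof (rule bdd_aboveI2)
    fix z :: "real^'n" assume z: "z \<in> nonneg_orthant"
    have "q z \<in> \<Gamma>" "s z \<ge> 0" using mech z by (auto simp: mechanism_in_def is_NPT_def)
    then have "q z \<bullet> y - s z \<le> norm (q z) * norm y"
      using norm_cauchy_schwarz[of "q z" y] by linarith
    also have "\<dots> \<le> C * norm y" using C \<open>q z \<in> \<Gamma>\<close> by (simp add: mult_right_mono)
    finally show "q z \<bullet> y - s z \<le> C * norm y" .
  qed
  then show ?thesis unfolding buyer_payoff_def using z by (rule cSUP_upper2) simp
qed

lemma payoff_eq:
  assumes mech: "mechanism_in \<Gamma> q s" and C: "\<forall>g\<in>\<Gamma>. norm g \<le> C"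
    and y: "y \<in> nonneg_orthant"
  shows "buyer_payoff q s y = q y \<bullet> y - s y"
proof (rule antisym)
  show "buyer_payoff q s y \<le> q y \<bullet> y - s y"
    unfolding buyer_payoff_def
    using mech y zero_orth by (intro cSUP_least) (auto simp: mechanism_in_def is_IC_def)
  show "q y \<bullet> y - s y \<le> buyer_payoff q s y" by (rule payoff_upper[OF mech C y])
qed

lemma payoff_lip:
  fixes q :: "real^'n \<Rightarrow> real^'n"
  assumes mech: "mechanism_in \<Gamma> q s" and C: "\<forall>g\<in>\<Gamma>. norm g \<le> C"
  shows "buyer_payoff q s x \<le> buyer_payoff q s y + C * norm (x - y)"
  unfolding buyer_payoff_def[of q s x]
proof (rule cSUP_least)
  show "nonneg_orthant \<noteq> {}" using zero_orth by blast
  fix z :: "real^'n" assume z: "z \<in> nonneg_orthant"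
  have "q z \<in> \<Gamma>" using mech z by (auto simp: mechanism_in_def)
  have "q z \<bullet> x - s z = (q z \<bullet> y - s z) + q z \<bullet> (x - y)" by (simp add: inner_diff_right)
  also have "q z \<bullet> (x - y) \<le> C * norm (x - y)"
    using norm_cauchy_schwarz[of "q z" "x - y"] C \<open>q z \<in> \<Gamma>\<close>
    by (meson mult_right_mono norm_ge_zero order_trans)
  finally show "q z \<bullet> x - s z \<le> buyer_payoff q s y + C * norm (x - y)"
    using payoff_upper[OF mech C z, of y] by linarith
qed

lemma payoff_cont:
  assumes mech: "mechanism_in \<Gamma> q s" and C: "\<forall>g\<in>\<Gamma>. norm g \<le> C" and C0: "0 \<le> C"
  shows "continuous_on UNIV (buyer_payoff q s)"
proof (rule lipschitz_on_continuous_on)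
  show "C-lipschitz_on UNIV (buyer_payoff q s)"
    unfolding lipschitz_on_def
  proof (intro conjI C0 ballI)
    fix x y :: "real^'a"
    have "buyer_payoff q s x \<le> buyer_payoff q s y + C * norm (x - y)"
      "buyer_payoff q s y \<le> buyer_payoff q s x + C * norm (y - x)"
      using payoff_lip[OF mech C] by auto
    then show "dist (buyer_payoff q s x) (buyer_payoff q s y) \<le> C * dist x y"
      by (simp add: dist_real_def dist_norm norm_minus_commute abs_le_iff)
  qed
qed

lemma quot_lower:
  assumes mech: "mechanism_in \<Gamma> q s" and C: "\<forall>g\<in>\<Gamma>. norm g \<le> C"
    and x: "x \<in> nonneg_orthant" and d: "0 < d"
  shows "q x \<bullet> x \<le> (buyer_payoff q s (x + d *\<^sub>R x) - buyer_payoff q s x) / d"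
proof -
  have "q x \<bullet> (x + d *\<^sub>R x) - s x \<le> buyer_payoff q s (x + d *\<^sub>R x)"
    by (rule payoff_upper[OF mech C x])
  moreover have "buyer_payoff q s x = q x \<bullet> x - s x" by (rule payoff_eq[OF mech C x])
  ultimately have "d * (q x \<bullet> x) \<le> buyer_payoff q s (x + d *\<^sub>R x) - buyer_payoff q s x"
    by (simp add: inner_add_right)
  then show ?thesis using d by (simp add: pos_le_divide_eq mult.commute)
qed

lemma quot_mono:
  assumes mech: "mechanism_in \<Gamma> q s" and C: "\<forall>g\<in>\<Gamma>. norm g \<le> C"
    and x: "x \<in> nonneg_orthant" and d1: "0 < d1" and d12: "d1 \<le> d2"
  shows "(buyer_payoff q s (x + d1 *\<^sub>R x) - buyer_payoff q s x) / d1
       \<le> (buyer_payoff q s (x + d2 *\<^sub>R x) - buyer_payoff q s x) / d2"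
proof -
  define b where "b = buyer_payoff q s"
  define y1 where "y1 = x + d1 *\<^sub>R x"
  have y1: "y1 \<in> nonneg_orthant" unfolding y1_def using x d1 by (intro ray_orth) auto
  define c where "c = q y1 \<bullet> x"
  define s1 where "s1 = s y1"
  have b1: "b y1 = (1 + d1) * c - s1"
    unfolding b_def payoff_eq[OF mech C y1] c_def s1_def
    by (simp add: y1_def inner_add_right algebra_simps)
  have b0: "b x \<ge> c - s1" unfolding b_def c_def s1_def using payoff_upper[OF mech C y1] .
  have b2: "b (x + d2 *\<^sub>R x) \<ge> (1 + d2) * c - s1"
    using payoff_upper[OF mech C y1, of "x + d2 *\<^sub>R x"]
    unfolding b_def c_def s1_def by (simp add: inner_add_right algebra_simps)
  have m1: "(d2 - d1) * b x \<ge> (d2 - d1) * (c - s1)" using b0 d12 by (intro mult_left_mono) auto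
  have m2: "d1 * b (x + d2 *\<^sub>R x) \<ge> d1 * ((1 + d2) * c - s1)" using b2 d1 by (intro mult_left_mono) auto
  have "d2 * (b y1 - b x) \<le> d1 * (b (x + d2 *\<^sub>R x) - b x)"
  proof -
    have "d2 * b y1 = d2 * ((1 + d1) * c - s1)" using b1 by simp
    then show ?thesis using m1 m2 by (simp add: algebra_simps)
  qed
  then show ?thesis
    using d1 d12 unfolding b_def y1_def by (simp add: field_simps)
qed

lemma quot_tendsto:
  fixes q :: "real^'n \<Rightarrow> real^'n"
  assumes mech: "mechanism_in \<Gamma> q s" and C: "\<forall>g\<in>\<Gamma>. norm g \<le> C"
    and x: "x \<in> nonneg_orthant"
  shows "((\<lambda>d. (buyer_payoff q s (x + d *\<^sub>R x) - buyer_payoff q s x) / d)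
           \<longlongrightarrow> dir_deriv (buyer_payoff q s) x x) (at_right 0)"
proof -
  let ?f = "\<lambda>d. (buyer_payoff q s (x + d *\<^sub>R x) - buyer_payoff q s x) / d"
  have "(?f \<longlongrightarrow> Inf (?f ` ({0<..} \<inter> {0<..}))) (at (0::real) within ({0<..} \<inter> {0<..}))"
    by (rule Lim_right_bound[where K = "q x \<bullet> x"])
       (auto intro: quot_mono[OF mech C x] quot_lower[OF mech C x])
  then have lim: "(?f \<longlongrightarrow> Inf (?f ` {0<..})) (at_right 0)" by simp
  then have "dir_deriv (buyer_payoff q s) x x = Inf (?f ` {0<..})"
    unfolding dir_deriv_def by (intro tendsto_Lim) auto
  then show ?thesis using lim by simp
qed

lemma limsup_ereal_to_ennreal:
  fixes a :: "nat \<Rightarrow> real"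
  assumes a: "\<And>n. 0 \<le> a n" and c: "0 \<le> c"
    and le: "limsup (\<lambda>n. ereal (a n)) \<le> ereal c"
  shows "limsup (\<lambda>n. ennreal (a n)) \<le> ennreal c"
  unfolding Limsup_le_iff
proof (intro allI impI)
  fix y :: ennreal assume y: "ennreal c < y"
  show "\<forall>\<^sub>F n in sequentially. ennreal (a n) < y"
  proof (cases y)
    case (real r)
    then have r: "0 \<le> r" "c < r" using y c ennreal_less_iff by auto
    have "ereal c < ereal r" using r by simp
    then have "\<forall>\<^sub>F n in sequentially. ereal (a n) < ereal r"
      using le Limsup_le_iff by (metis order.strict_trans1 Limsup_lessD)
    then show ?thesis
      by eventually_elim (use r real c in \<open>auto intro!: ennreal_lessI\<close>)
  next
    case top
    then show ?thesis by simp
  qed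
qed

lemma limsup_ennreal_to_ereal:
  fixes a :: "nat \<Rightarrow> real"
  assumes a: "\<And>n. 0 \<le> a n" and c: "0 \<le> c"
    and le: "limsup (\<lambda>n. ennreal (a n)) \<le> ennreal c"
  shows "limsup (\<lambda>n. ereal (a n)) \<le> ereal c"
  unfolding Limsup_le_iff
proof (intro allI impI)
  fix y :: ereal assume y: "ereal c < y"
  show "\<forall>\<^sub>F n in sequentially. ereal (a n) < y"
  proof (cases y)
    case (real r)
    then have r: "0 \<le> r" "c < r" using y c by auto
    have "ennreal c < ennreal r" using r c by (auto intro!: ennreal_lessI)
    then have "\<forall>\<^sub>F n in sequentially. ennreal (a n) < ennreal r"
      using le by (metis order.strict_trans1 Limsup_lessD)
    then show ?thesis
      by eventually_elim (use r real a in \<open>auto simp: ennreal_less_iff\<close>)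
  next
    case PInf
    then show ?thesis by simp
  next
    case MInf
    then show ?thesis using y by simp
  qed
qed

theorem proposition4:
  fixes \<Gamma> :: "(real^'n) set"
    and qn :: "nat \<Rightarrow> real^'n \<Rightarrow> real^'n" and sn :: "nat \<Rightarrow> real^'n \<Rightarrow> real"
    and q :: "real^'n \<Rightarrow> real^'n" and s :: "real^'n \<Rightarrow> real"
  assumes "\<Gamma> \<noteq> {}" and "compact \<Gamma>" and "\<Gamma> \<subseteq> nonneg_orthant"
    and "\<And>n. mechanism_in \<Gamma> (qn n) (sn n)"
    and "mechanism_in \<Gamma> q s"
    and "\<And>x. (\<lambda>n. buyer_payoff (qn n) (sn n) x) \<longlonglongrightarrow> buyer_payoff q s x"
    and "seller_favorable \<Gamma> q s"
  shows "(\<forall>x\<in>nonneg_orthant. limsup (\<lambda>n. ereal (sn n x)) \<le> ereal (s x))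
    \<and> (\<forall>(M::'a measure) X. prob_space M \<longrightarrow> X \<in> borel_measurable M
         \<longrightarrow> (\<forall>\<omega>\<in>space M. X \<omega> \<in> nonneg_orthant)
         \<longrightarrow> integrable M (\<lambda>\<omega>. norm (X \<omega>))
         \<longrightarrow> (\<forall>n. (\<lambda>\<omega>. sn n (X \<omega>)) \<in> borel_measurable M)
         \<longrightarrow> limsup (\<lambda>n. ereal (revenue M X (sn n))) \<le> ereal (revenue M X s))"
proof -
  note mech_n = assms(4) and mech = assms(5) and conv = assms(6) and sf = assms(7)
  obtain C where C0: "C > 0" and C: "\<forall>g\<in>\<Gamma>. norm g \<le> C"
    using compact_imp_bounded[OF assms(2)] bounded_pos by blast
  define bn where "bn n = buyer_payoff (qn n) (sn n)" for n
  define b where "b = buyer_payoff q s"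
  define D where "D d x = (b (x + d *\<^sub>R x) - b x) / d" for d x
  have sx: "s x = dir_deriv b x x - b x" if "x \<in> nonneg_orthant" for x
    using sf that unfolding seller_favorable_def b_def by auto
  have Dlim: "((\<lambda>d. D d x) \<longlongrightarrow> s x + b x) (at_right 0)" if x: "x \<in> nonneg_orthant" for x
    using quot_tendsto[OF mech C x] sx[OF x] unfolding D_def b_def by simp
  have part1: "limsup (\<lambda>n. ereal (sn n x)) \<le> ereal (s x)" if x: "x \<in> nonneg_orthant" for x
  proof -
    have bound: "limsup (\<lambda>n. ereal (sn n x)) \<le> ereal (D d x - b x)" if d: "0 < d" for d
    proof -
      have le: "sn n x \<le> (bn n (x + d *\<^sub>R x) - bn n x) / d - bn n x" for n
        using quot_lower[OF mech_n C x d, of n] payoff_eq[OF mech_n C x, of n]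
        unfolding bn_def by simp
      have "(\<lambda>n. (bn n (x + d *\<^sub>R x) - bn n x) / d - bn n x) \<longlonglongrightarrow> D d x - b x"
        unfolding D_def b_def bn_def using d by (intro tendsto_intros conv) auto
      then have "(\<lambda>n. ereal ((bn n (x + d *\<^sub>R x) - bn n x) / d - bn n x))
                  \<longlonglongrightarrow> ereal (D d x - b x)" by (rule tendsto_ereal)
      then have "limsup (\<lambda>n. ereal ((bn n (x + d *\<^sub>R x) - bn n x) / d - bn n x)) = ereal (D d x - b x)"
        by (intro lim_imp_Limsup) auto
      moreover have "limsup (\<lambda>n. ereal (sn n x)) \<le> limsup (\<lambda>n. ereal ((bn n (x + d *\<^sub>R x) - bn n x) / d - bn n x))"
        using le by (intro Limsup_mono) auto
      ultimately show ?thesis by simp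
    qed
    have "((\<lambda>d. ereal (D d x - b x)) \<longlongrightarrow> ereal (s x)) (at_right 0)"
      using Dlim[OF x] by (intro tendsto_ereal) (auto intro: tendsto_eq_intros)
    then show ?thesis
      by (rule tendsto_le[OF trivial_limit_at_right_real _ tendsto_const])
         (use bound eventually_at_right_less[of 0] in \<open>auto elim: eventually_mono\<close>)
  qed
  have bnd: "sn n y \<le> C * norm y" "0 \<le> sn n y" "s y \<le> C * norm y" "0 \<le> s y"
    if y: "y \<in> nonneg_orthant" for n y
  proof -
    have g: "qn n y \<in> \<Gamma>" "q y \<in> \<Gamma>" using mech_n[of n] mech y by (auto simp: mechanism_in_def)
    have "qn n y \<bullet> y \<le> C * norm y" "q y \<bullet> y \<le> C * norm y"
      using norm_cauchy_schwarz[of "qn n y" y] norm_cauchy_schwarz[of "q y" y] C g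
      by (meson mult_right_mono norm_ge_zero order_trans)+
    then show "sn n y \<le> C * norm y" "0 \<le> sn n y" "s y \<le> C * norm y" "0 \<le> s y"
      using mech_n[of n] mech y by (auto simp: mechanism_in_def is_IR_def is_NPT_def)
  qed
  have part2: "limsup (\<lambda>n. ereal (revenue M X (sn n))) \<le> ereal (revenue M X s)"
    if P: "prob_space M" and Xm: "X \<in> borel_measurable M"
      and Xo: "\<forall>\<omega>\<in>space M. X \<omega> \<in> nonneg_orthant"
      and Xi: "integrable M (\<lambda>\<omega>. norm (X \<omega>))"
      and snm: "\<forall>n. (\<lambda>\<omega>. sn n (X \<omega>)) \<in> borel_measurable M"
    for M :: "'a measure" and X
  proof -
    have hi: "integrable M (\<lambda>\<omega>. C * norm (X \<omega>))" using Xi by simp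
    have bm: "b \<in> borel_measurable borel"
      unfolding b_def using payoff_cont[OF mech C] C0
      by (intro borel_measurable_continuous_onI) auto
    have sXm: "(\<lambda>\<omega>. s (X \<omega>)) \<in> borel_measurable M"
    proof (rule borel_measurable_LIMSEQ_real)
      fix \<omega> assume "\<omega> \<in> space M"
      then have x: "X \<omega> \<in> nonneg_orthant" using Xo by auto
      have f: "filterlim (\<lambda>m. inverse (real (Suc m))) (at_right 0) sequentially"
        by (intro tendsto_imp_filterlim_at_right LIMSEQ_inverse_real_of_nat) auto
      have "(\<lambda>m. D (inverse (real (Suc m))) (X \<omega>)) \<longlonglongrightarrow> s (X \<omega>) + b (X \<omega>)"
        using filterlim_compose[OF Dlim[OF x] f] .
      then show "(\<lambda>m. D (inverse (real (Suc m))) (X \<omega>) - b (X \<omega>)) \<longlonglongrightarrow> s (X \<omega>)"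
        by (auto intro: tendsto_eq_intros)
    next
      fix m
      show "(\<lambda>\<omega>. D (inverse (real (Suc m))) (X \<omega>) - b (X \<omega>)) \<in> borel_measurable M"
        unfolding D_def using bm Xm by measurable
    qed
    have fi: "integrable M (\<lambda>\<omega>. sn n (X \<omega>))" for n
      using snm bnd Xo C0 by (intro Bochner_Integration.integrable_bound[OF hi]) (auto intro!: AE_I2 simp: abs_mult)
    have si: "integrable M (\<lambda>\<omega>. s (X \<omega>))"
      using sXm bnd Xo C0 by (intro Bochner_Integration.integrable_bound[OF hi]) (auto intro!: AE_I2 simp: abs_mult)
    have eqn: "(\<integral>\<^sup>+\<omega>. ennreal (sn n (X \<omega>)) \<partial>M) = ennreal (revenue M X (sn n))" for n
      unfolding revenue_def using fi bnd Xo by (intro nn_integral_eq_integral) auto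
    have eqs: "(\<integral>\<^sup>+\<omega>. ennreal (s (X \<omega>)) \<partial>M) = ennreal (revenue M X s)"
      unfolding revenue_def using si bnd Xo by (intro nn_integral_eq_integral) auto
    have eqh: "(\<integral>\<^sup>+\<omega>. ennreal (C * norm (X \<omega>)) \<partial>M) = ennreal (integral\<^sup>L M (\<lambda>\<omega>. C * norm (X \<omega>)))"
      using hi C0 by (intro nn_integral_eq_integral) auto
    have "limsup (\<lambda>n. \<integral>\<^sup>+\<omega>. ennreal (sn n (X \<omega>)) \<partial>M) \<le>
          (\<integral>\<^sup>+\<omega>. limsup (\<lambda>n. ennreal (sn n (X \<omega>))) \<partial>M)"
      by (rule nn_integral_limsup[where w = "\<lambda>\<omega>. ennreal (C * norm (X \<omega>))"])
         (use snm Xm bnd Xo eqh in \<open>auto intro!: AE_I2 ennreal_leI\<close>)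
    also have "\<dots> \<le> (\<integral>\<^sup>+\<omega>. ennreal (s (X \<omega>)) \<partial>M)"
      using part1 Xo bnd by (intro nn_integral_mono limsup_ereal_to_ennreal) auto
    finally have "limsup (\<lambda>n. ennreal (revenue M X (sn n))) \<le> ennreal (revenue M X s)"
      using eqn eqs by simp
    then show ?thesis
      using bnd Xo unfolding revenue_def
      by (intro limsup_ennreal_to_ereal integral_nonneg_AE AE_I2) (auto simp: revenue_def)
  qed
  show ?thesis using part1 part2 by blast
qed

end
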